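(* Let $A=\mathbb C\langle u^{\pm1},v^{\pm1}\rangle$ and $c=uvu^{-1}v^{-1}$. For every $H\in A$, $\{c,H\}_K\equiv0\bmod[A,A]$; that is, $\pi(c)$ lies in the center of the bracket induced by $\{\cdot,\cdot\}_K$ on $A/[A,A]$.
   Context: $A$ is the group algebra over $\mathbb C$ of the free group on $u,v$; $[A,A]$ is the span of all $ab-ba$; $\pi:A\to A/[A,A]$ the projection. $\mu(a\otimes b)=ab$; $A\otimes A$ has componentwise multiplication. The double bracket $\llbracket\cdot\rrbracket_K:A\otimes A\to A\otimes A$ is the linear map with $\llbracket u\otimes v\rrbracket_K=-vu\otimes1$, $\llbracket v\otimes u\rrbracket_K=uv\otimes1$, $\llbracket u\otimes u\rrbracket_K=\llbracket v\otimes v\rrbracket_K=0$, extended (also to inverse letters) by the Leibniz rules $\llbracket a\otimes bc\rrbracket_K=\llbracket a\otimes b\rrbracket_K(1\otimes c)+(b\otimes1)\llbracket a\otimes c\rrbracket_K$ and $\llbracket ab\otimes c\rrbracket_K=\llbracket a\otimes c\rrbracket_K(b\otimes1)+(1\otimes a)\llbracket b\otimes c\rrbracket_K$. The bracket is $\{a,b\}_K=\mu(\llbracket a\otimes b\rrbracket_K)$. *)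

theory Defs
  imports Complex_Main "HOL-Library.Poly_Mapping" "HOL-Library.Product_Plus"
begin

datatype gen = U | V

type_synonym letter = "gen \<times> bool"   \<comment> \<open>(x, True) is x, (x, False) is x inverse\<close>

definition inv_letter :: "letter \<Rightarrow> letter" where
  "inv_letter l = (fst l, \<not> snd l)"

fun cancel :: "letter \<Rightarrow> letter list \<Rightarrow> letter list" where
  "cancel a [] = [a]"
| "cancel a (b # w) = (if b = inv_letter a then w else a # b # w)"

fun red :: "letter list \<Rightarrow> letter list" where
  "red [] = []"
| "red (a # w) = cancel a (red w)"

fun reduced :: "letter list \<Rightarrow> bool" where
  "reduced [] = True"
| "reduced [a] = True"
| "reduced (a # b # w) = (b \<noteq> inv_letter a \<and> reduced (b # w))"

lemma inv_inv_letter[simp]: "inv_letter (inv_letter a) = a"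
  by (simp add: inv_letter_def)

lemma inv_letter_neq[simp]: "inv_letter a \<noteq> a" "a \<noteq> inv_letter a"
  by (cases a, simp add: inv_letter_def)+

lemma reduced_tl: "reduced (a # w) \<Longrightarrow> reduced w"
  by (cases w) auto

lemma reduced_cancel: "reduced w \<Longrightarrow> reduced (cancel a w)"
proof (cases w)
  case Nil then show ?thesis by simp
next
  case (Cons b w')
  assume r: "reduced w"
  show ?thesis using r Cons by (auto intro: reduced_tl)
qed

lemma reduced_red: "reduced (red w)"
  by (induction w) (auto intro: reduced_cancel)

lemma red_reduced: "reduced w \<Longrightarrow> red w = w"
proof (induction w)
  case Nil then show ?case by simp
next
  case (Cons a w)
  then have "red w = w" by (auto intro: reduced_tl)
  then show ?case using Cons.prems by (cases w) auto
qed

lemma red_red[simp]: "red (red w) = red w"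
  using red_reduced reduced_red by blast

lemma red_append: "red (x @ y) = foldr cancel x (red y)"
  by (induction x) auto

lemma cancel_cancel_inv: "reduced s \<Longrightarrow> cancel a (cancel (inv_letter a) s) = s"
proof (cases s)
  case Nil then show ?thesis by simp
next
  case (Cons c s')
  assume r: "reduced s"
  show ?thesis
  proof (cases "c = a")
    case True
    then show ?thesis using r Cons by (cases s') auto
  next
    case False
    then show ?thesis using Cons by auto
  qed
qed

lemma reduced_foldr: "reduced r \<Longrightarrow> reduced (foldr cancel x r)"
  by (induction x) (auto intro: reduced_cancel)

lemma foldr_cancel_cancel:
  assumes "reduced w" "reduced r"
  shows "foldr cancel (cancel a w) r = cancel a (foldr cancel w r)"
proof (cases w)
  case Nil then show ?thesis by simp
next
  case (Cons b w')
  show ?thesis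
  proof (cases "b = inv_letter a")
    case True
    have "reduced (foldr cancel w' r)" using assms reduced_foldr by blast
    then show ?thesis using Cons True cancel_cancel_inv by simp
  next
    case False
    then show ?thesis using Cons by simp
  qed
qed

lemma foldr_red: "reduced r \<Longrightarrow> foldr cancel (red x) r = foldr cancel x r"
proof (induction x)
  case Nil then show ?case by simp
next
  case (Cons a x)
  have "foldr cancel (red (a # x)) r = foldr cancel (cancel a (red x)) r" by simp
  also have "\<dots> = cancel a (foldr cancel (red x) r)"
    using foldr_cancel_cancel reduced_red Cons.prems by blast
  also have "\<dots> = foldr cancel (a # x) r" using Cons by simp
  finally show ?case .
qed

lemma red_assoc1: "red (red x @ y) = red (x @ y)"
  by (simp add: red_append foldr_red reduced_red)

lemma red_assoc2: "red (x @ red y) = red (x @ y)"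
  by (simp add: red_append)

typedef fg = "{w. reduced w}"
  by (rule exI[of _ "[]"]) simp

setup_lifting type_definition_fg

instantiation fg :: monoid_add
begin
lift_definition zero_fg :: fg is "[]" by simp
lift_definition plus_fg :: "fg \<Rightarrow> fg \<Rightarrow> fg" is "\<lambda>x y. red (x @ y)"
  by (rule reduced_red)
instance
proof
  fix a b c :: fg
  show "a + b + c = a + (b + c)"
    by transfer (metis append_assoc red_assoc1 red_assoc2)
  show "0 + a = a" by transfer (simp add: red_reduced)
  show "a + 0 = a" by transfer (simp add: red_reduced)
qed
end

text \<open>The group operation of the free group is written additively (as the
  library's group algebra construction requires a monoid_add key type);
  it is nevertheless non-commutative.\<close>

lift_definition gen_fg :: "letter \<Rightarrow> fg" is "\<lambda>l. [l]" by simp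

type_synonym alg = "fg \<Rightarrow>\<^sub>0 complex"
type_synonym alg2 = "(fg \<times> fg) \<Rightarrow>\<^sub>0 complex"

definition scal :: "complex \<Rightarrow> ('k \<Rightarrow>\<^sub>0 complex) \<Rightarrow> ('k \<Rightarrow>\<^sub>0 complex)" where
  "scal z x = Poly_Mapping.map ((*) z) x"

definition elt :: "letter \<Rightarrow> alg" where
  "elt l = Poly_Mapping.single (gen_fg l) 1"

abbreviation u :: alg where "u \<equiv> elt (U, True)"
abbreviation v :: alg where "v \<equiv> elt (V, True)"
abbreviation u_inv :: alg where "u_inv \<equiv> elt (U, False)"
abbreviation v_inv :: alg where "v_inv \<equiv> elt (V, False)"

text \<open>Simple tensors: A \<otimes> A is identified with the group algebra of F \<times> F,
  with componentwise multiplication.\<close>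
definition tens :: "alg \<Rightarrow> alg \<Rightarrow> alg2" where
  "tens a b = (\<Sum>g\<in>Poly_Mapping.keys a. \<Sum>h\<in>Poly_Mapping.keys b.
      Poly_Mapping.single (g, h) (Poly_Mapping.lookup a g * Poly_Mapping.lookup b h))"

definition mu :: "alg2 \<Rightarrow> alg" where
  "mu T = (\<Sum>p\<in>Poly_Mapping.keys T. Poly_Mapping.single (fst p + snd p) (Poly_Mapping.lookup T p))"

inductive_set comm_span :: "alg set" where
  zero: "0 \<in> comm_span"
| comm: "a * b - b * a \<in> comm_span"
| add: "x \<in> comm_span \<Longrightarrow> y \<in> comm_span \<Longrightarrow> x + y \<in> comm_span"
| scal: "x \<in> comm_span \<Longrightarrow> scal z x \<in> comm_span"

definition is_double_bracket_K :: "(alg2 \<Rightarrow> alg2) \<Rightarrow> bool" where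
  "is_double_bracket_K B \<longleftrightarrow>
     (\<forall>x y. B (x + y) = B x + B y) \<and>
     (\<forall>z x. B (scal z x) = scal z (B x)) \<and>
     B (tens u v) = - tens (v * u) 1 \<and>
     B (tens v u) = tens (u * v) 1 \<and>
     B (tens u u) = 0 \<and>
     B (tens v v) = 0 \<and>
     (\<forall>a b c. B (tens a (b * c)) = B (tens a b) * tens 1 c + tens b 1 * B (tens a c)) \<and>
     (\<forall>a b c. B (tens (a * b) c) = B (tens a c) * tens b 1 + tens 1 a * B (tens b c))"

definition bracket :: "(alg2 \<Rightarrow> alg2) \<Rightarrow> alg \<Rightarrow> alg \<Rightarrow> alg" where
  "bracket B a b = mu (B (tens a b))"

end

theory Submission
  imports Defs
begin

lemma lookup_scal: "Poly_Mapping.lookup (scal z x) k = z * Poly_Mapping.lookup x k"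
  by (simp add: scal_def map.rep_eq when_def)

lemma scal_add: "scal z (x + y) = scal z x + scal z y"
  by (rule poly_mapping_eqI) (simp add: lookup_scal lookup_add distrib_left)

lemma scal_single: "scal z (Poly_Mapping.single k c) = Poly_Mapping.single k (z * c)"
  by (rule poly_mapping_eqI) (simp add: lookup_scal lookup_single when_def)

lemma expand: "(X :: 'a \<Rightarrow>\<^sub>0 'b::comm_monoid_add) = (\<Sum>k\<in>Poly_Mapping.keys X. Poly_Mapping.single k (Poly_Mapping.lookup X k))"
proof (rule poly_mapping_eqI)
  fix i
  show "Poly_Mapping.lookup X i = Poly_Mapping.lookup (\<Sum>k\<in>Poly_Mapping.keys X. Poly_Mapping.single k (Poly_Mapping.lookup X k)) i"
    by (simp add: lookup_sum lookup_single when_def in_keys_iff)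
qed

lemma add_ext:
  fixes F G :: "('a \<Rightarrow>\<^sub>0 'b::comm_monoid_add) \<Rightarrow> 'c::ab_group_add"
  assumes "\<And>x y. F (x + y) = F x + F y" "\<And>x y. G (x + y) = G x + G y"
    "\<And>k c. F (Poly_Mapping.single k c) = G (Poly_Mapping.single k c)"
  shows "F X = G X"
proof -
  have F0: "F 0 = 0" using assms(1)[of 0 0] by simp
  have G0: "G 0 = 0" using assms(2)[of 0 0] by simp
  have "\<And>S. finite S \<Longrightarrow> F (\<Sum>k\<in>S. Poly_Mapping.single k (Poly_Mapping.lookup X k)) = G (\<Sum>k\<in>S. Poly_Mapping.single k (Poly_Mapping.lookup X k))"
  proof -
    fix S :: "'a set" assume "finite S"
    then show "?thesis S"
      by (induction S rule: finite_induct) (simp_all add: F0 G0 assms)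
  qed
  then show ?thesis by (metis expand finite_keys)
qed

lemma mu_add: "mu (X + Y) = mu X + mu Y"
  unfolding mu_def by (rule setsum_keys_plus_distrib) (simp_all add: single_add)

lemma mu_single: "mu (Poly_Mapping.single p c) = Poly_Mapping.single (fst p + snd p) c"
  by (cases "c = 0") (simp_all add: mu_def)

lemma tens_single: "tens (Poly_Mapping.single g x) (Poly_Mapping.single h y) = Poly_Mapping.single (g,h) (x*y)"
  by (cases "x = 0"; cases "y = 0") (simp_all add: tens_def)


lemma mu_zero: "mu 0 = 0" using mu_add[of 0 0] by simp
lemma mu_uminus: "mu (- X) = - mu X"
proof -
  have "mu X + mu (- X) = 0" using mu_add[of X "-X"] by (simp add: mu_zero)
  then show ?thesis by (simp add: eq_neg_iff_add_eq_0 add.commute)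
qed
lemma mu_diff: "mu (X - Y) = mu X - mu Y" unfolding diff_conv_add_uminus by (simp only: mu_add mu_uminus)

lemma mu_right: "mu (X * Poly_Mapping.single (0,g) 1) = mu X * Poly_Mapping.single g (1::complex)"
  by (rule add_ext[where F="\<lambda>X. mu (X * Poly_Mapping.single (0,g) 1)" and G="\<lambda>X. mu X * Poly_Mapping.single g 1"])
     (simp_all add: distrib_right mu_add mult_single mu_single add.assoc)

lemma mu_left: "mu (Poly_Mapping.single (g,0) 1 * X) = Poly_Mapping.single g (1::complex) * mu X"
  by (rule add_ext[where F="\<lambda>X. mu (Poly_Mapping.single (g,0) 1 * X)" and G="\<lambda>X. Poly_Mapping.single g 1 * mu X"])
     (simp_all add: distrib_left mu_add mult_single mu_single add.assoc)

lemma mu_scal: "mu (scal z X) = scal z (mu X)"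
proof (rule add_ext[where F="\<lambda>X. mu (scal z X)" and G="\<lambda>X. scal z (mu X)"])
  fix x y show "mu (scal z (x + y)) = mu (scal z x) + mu (scal z y)" by (simp only: scal_add mu_add)
next
  fix x y show "scal z (mu (x + y)) = scal z (mu x) + scal z (mu y)" by (simp only: scal_add mu_add)
next
  fix k c show "mu (scal z (Poly_Mapping.single k c)) = scal z (mu (Poly_Mapping.single k c))"
    by (simp only: scal_single mu_single)
qed

lemma red_cons_reduced: "reduced (a # w) \<Longrightarrow> cancel a w = a # w"
  by (cases w) auto

lemma Abs_sum: "reduced w \<Longrightarrow> Abs_fg w = sum_list (map gen_fg w)"
proof (induction w)
  case Nil then show ?case by (simp add: zero_fg_def)
next
  case (Cons a w)
  have rw: "reduced w" using Cons.prems reduced_tl by blast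
  have "Rep_fg (gen_fg a + Abs_fg w) = red ([a] @ w)"
    by (simp add: plus_fg.rep_eq gen_fg.rep_eq Abs_fg_inverse rw)
  also have "\<dots> = a # w" using red_cons_reduced[OF Cons.prems] rw by (simp add: red_reduced)
  finally have "gen_fg a + Abs_fg w = Abs_fg (a # w)"
    by (metis Rep_fg_inverse)
  then have "Abs_fg (a # w) = gen_fg a + sum_list (map gen_fg w)" using Cons.IH[OF rw] by simp
  then show ?case by (simp only: list.map sum_list.Cons)
qed

lemma fg_sum: "h = sum_list (map gen_fg (Rep_fg h))"
proof -
  have "reduced (Rep_fg h)" using Rep_fg by simp
  then show ?thesis using Abs_sum Rep_fg_inverse by metis
qed

lemma gen_inv1: "gen_fg (x, True) + gen_fg (x, False) = 0"
  by (rule Rep_fg_inject[THEN iffD1]) (simp add: plus_fg.rep_eq gen_fg.rep_eq zero_fg.rep_eq inv_letter_def)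
lemma gen_inv2: "gen_fg (x, False) + gen_fg (x, True) = 0"
  by (rule Rep_fg_inject[THEN iffD1]) (simp add: plus_fg.rep_eq gen_fg.rep_eq zero_fg.rep_eq inv_letter_def)


abbreviation mo :: "fg \<Rightarrow> alg" where "mo g \<equiv> Poly_Mapping.single g 1"
abbreviation MO :: "fg \<times> fg \<Rightarrow> alg2" where "MO p \<equiv> Poly_Mapping.single p 1"

definition ga :: fg where "ga = gen_fg (U, True)"
definition gai :: fg where "gai = gen_fg (U, False)"
definition gb :: fg where "gb = gen_fg (V, True)"
definition gbi :: fg where "gbi = gen_fg (V, False)"

lemma inv_simps[simp]:
  "ga + gai = 0" "gai + ga = 0" "gb + gbi = 0" "gbi + gb = 0"
  "ga + (gai + x) = x" "gai + (ga + x) = x" "gb + (gbi + x) = x" "gbi + (gb + x) = x"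
  by (simp_all add: ga_def gai_def gb_def gbi_def gen_inv1 gen_inv2 flip: add.assoc)

lemma tens_mo: "tens (mo g) (mo h) = MO (g, h)"
  by (simp add: tens_single)
lemma one_alg: "(1::alg) = mo 0" by simp
lemma one_alg2: "(1::alg2) = MO (0, 0)" by (simp flip: zero_prod_def)
lemma MO_mult: "MO p * MO q = MO (p + q)" by (simp add: mult_single)
lemma mo_mult: "mo p * mo q = mo (p + q)" by (simp add: mult_single)
lemma tens_mo1: "tens (mo g) 1 = MO (g, 0)" by (subst one_alg) (rule tens_mo)
lemma tens_1mo: "tens 1 (mo g) = MO (0, g)" by (subst one_alg) (rule tens_mo)

lemma solve_left:
  assumes "MO (0, x) * Y = Z" "x' + x = 0"
  shows "Y = MO (0, x') * Z"
proof -
  have "MO (0, x') * Z = (MO (0, x') * MO (0, x)) * Y" using assms(1) by (simp add: mult.assoc)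
  also have "\<dots> = Y" using assms(2) by (simp add: MO_mult flip: one_alg2)
  finally show ?thesis by simp
qed

lemma ring_inv:
  fixes l l' c dl dl' :: "'a::ring_1"
  assumes "l * l' = 1" "l' * l = 1" "dl = c * l - l * c" "0 = dl * l' + l * dl'"
  shows "dl' = c * l' - l' * c"
proof -
  have "dl' = l' * (l * dl')" using assms(2) by (simp flip: mult.assoc)
  also have "l * dl' = - (dl * l')" using assms(4) by (simp add: eq_neg_iff_add_eq_0 add.commute)
  also have "l' * - (dl * l') = - (l' * (c * l - l * c) * l')"
    using assms(3) by (simp add: mult.assoc)
  also have "\<dots> = - (l' * c * (l * l')) + (l' * l) * c * l'"
    by (simp add: algebra_simps)
  also have "\<dots> = c * l' - l' * c" using assms(1,2) by simp
  finally show ?thesis .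
qed

lemma mu_sum: "finite S \<Longrightarrow> mu (\<Sum>h\<in>S. f h) = (\<Sum>h\<in>S. mu (f h))"
  by (induction S rule: finite_induct) (simp_all add: mu_zero mu_add)

lemma comm_span_sum: "finite S \<Longrightarrow> (\<And>h. h \<in> S \<Longrightarrow> f h \<in> comm_span) \<Longrightarrow> (\<Sum>h\<in>S. f h) \<in> comm_span"
  by (induction S rule: finite_induct) (simp_all add: comm_span.zero comm_span.add)

context
  fixes B :: "alg2 \<Rightarrow> alg2"
  assumes hB: "is_double_bracket_K B"
begin

lemma B_add: "B (x + y) = B x + B y" using hB unfolding is_double_bracket_K_def by blast
lemma B_scal: "B (scal z x) = scal z (B x)" using hB unfolding is_double_bracket_K_def by blast
lemma B_zero: "B 0 = 0" using B_add[of 0 0] by simp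
lemma B_uminus: "B (- x) = - B x"
proof -
  have "B x + B (- x) = 0" using B_add[of x "-x"] by (simp add: B_zero)
  then show ?thesis by (simp add: eq_neg_iff_add_eq_0 add.commute)
qed

lemma L1: "B (MO (g1 + g2, h)) = B (MO (g1, h)) * MO (g2, 0) + MO (0, g1) * B (MO (g2, h))"
proof -
  have "B (tens (mo g1 * mo g2) (mo h)) = B (tens (mo g1) (mo h)) * tens (mo g2) 1 + tens 1 (mo g1) * B (tens (mo g2) (mo h))"
    using hB unfolding is_double_bracket_K_def by blast
  then show ?thesis by (simp only: mo_mult tens_mo tens_mo1 tens_1mo)
qed

lemma L2: "B (MO (g, h1 + h2)) = B (MO (g, h1)) * MO (0, h2) + MO (h1, 0) * B (MO (g, h2))"
proof -
  have "B (tens (mo g) (mo h1 * mo h2)) = B (tens (mo g) (mo h1)) * tens 1 (mo h2) + tens (mo h1) 1 * B (tens (mo g) (mo h2))"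
    using hB unfolding is_double_bracket_K_def by blast
  then show ?thesis by (simp only: mo_mult tens_mo tens_mo1 tens_1mo)
qed

lemma B0r: "B (MO (g, 0)) = 0"
proof -
  have "B (MO (g, 0 + 0)) = B (MO (g, 0)) * MO (0, 0) + MO (0, 0) * B (MO (g, 0))" by (rule L2)
  then have "B (MO (g, 0)) = B (MO (g, 0)) + B (MO (g, 0))" by (simp flip: one_alg2)
  then show ?thesis by simp
qed

lemma B0l: "B (MO (0, h)) = 0"
proof -
  have "B (MO (0 + 0, h)) = B (MO (0, h)) * MO (0, 0) + MO (0, 0) * B (MO (0, h))" by (rule L1)
  then have "B (MO (0, h)) = B (MO (0, h)) + B (MO (0, h))" by (simp flip: one_alg2)
  then show ?thesis by simp
qed

lemma base: "B (MO (ga, gb)) = - MO (gb + ga, 0)" "B (MO (gb, ga)) = MO (ga + gb, 0)"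
  "B (MO (ga, ga)) = 0" "B (MO (gb, gb)) = 0"
  using hB unfolding is_double_bracket_K_def
  by (simp_all add: elt_def ga_def gb_def tens_mo mo_mult tens_mo1)


lemma neg_from: "0 = (P::'b::ab_group_add) + Q \<Longrightarrow> Q = - P"
  by (simp add: eq_neg_iff_add_eq_0 add.commute)

abbreviation cg where "cg \<equiv> ga + (gb + (gai + gbi))"

lemma Tcg: "B (MO (cg, ga)) = MO (cg, ga) - MO (ga, ga + (gb + (gai + gbi)))"
proof -
  have "B (MO (ga + gai, ga)) = B (MO (ga, ga)) * MO (gai, 0) + MO (0, ga) * B (MO (gai, ga))" by (rule L1)
  then have "MO (0, ga) * B (MO (gai, ga)) = 0" by (simp add: B0l base)
  from solve_left[OF this inv_simps(2)] have Tai: "B (MO (gai, ga)) = 0" by simp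
  have "B (MO (gb + gbi, ga)) = B (MO (gb, ga)) * MO (gbi, 0) + MO (0, gb) * B (MO (gbi, ga))" by (rule L1)
  then have "0 = MO (ga, 0) + MO (0, gb) * B (MO (gbi, ga))" by (simp add: B0l base MO_mult add.assoc)
  then have "MO (0, gb) * B (MO (gbi, ga)) = - MO (ga, 0)" by (rule neg_from)
  from solve_left[OF this inv_simps(4)] have Tbi: "B (MO (gbi, ga)) = - MO (ga, gbi)" by (simp add: MO_mult)
  have T2: "B (MO (gai + gbi, ga)) = - MO (ga, gai + gbi)"
    using L1[of gai gbi ga] by (simp add: Tai Tbi MO_mult)
  have T3: "B (MO (gb + (gai + gbi), ga)) = MO (ga + (gb + (gai + gbi)), 0) - MO (ga, gb + (gai + gbi))"
    using L1[of gb "gai + gbi" ga] by (simp add: T2 base MO_mult add.assoc)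
  show ?thesis
    using L1[of ga "gb + (gai + gbi)" ga] by (simp add: T3 base MO_mult add.assoc algebra_simps)
qed

lemma Scg: "B (MO (cg, gb)) = MO (0, ga + (gb + gai)) - MO (gb + cg, 0)"
proof -
  have "B (MO (gb + gbi, gb)) = B (MO (gb, gb)) * MO (gbi, 0) + MO (0, gb) * B (MO (gbi, gb))" by (rule L1)
  then have "MO (0, gb) * B (MO (gbi, gb)) = 0" by (simp add: B0l base)
  from solve_left[OF this inv_simps(4)] have Sbi: "B (MO (gbi, gb)) = 0" by simp
  have "B (MO (ga + gai, gb)) = B (MO (ga, gb)) * MO (gai, 0) + MO (0, ga) * B (MO (gai, gb))" by (rule L1)
  then have "0 = - MO (gb, 0) + MO (0, ga) * B (MO (gai, gb))" by (simp add: B0l base MO_mult add.assoc)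
  then have "MO (0, ga) * B (MO (gai, gb)) = MO (gb, 0)" using neg_from by fastforce
  from solve_left[OF this inv_simps(2)] have Sai: "B (MO (gai, gb)) = MO (gb, gai)" by (simp add: MO_mult)
  have S2: "B (MO (gai + gbi, gb)) = MO (0, gai)"
    using L1[of gai gbi gb] by (simp add: Sai Sbi MO_mult)
  have S3: "B (MO (gb + (gai + gbi), gb)) = MO (0, gb + gai)"
    using L1[of gb "gai + gbi" gb] by (simp add: S2 base MO_mult)
  show ?thesis
    using L1[of ga "gb + (gai + gbi)" gb] by (simp add: S3 base MO_mult add.assoc algebra_simps)
qed


lemma c_eq: "u * v * u_inv * v_inv = mo cg"
  by (simp add: elt_def mo_mult ga_def gb_def gai_def gbi_def add.assoc)

lemma d_u: "mu (B (tens (mo cg) (mo ga))) = mo cg * mo ga - mo ga * mo cg"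
  by (simp add: tens_mo Tcg mu_diff mu_single mo_mult add.assoc)

lemma d_v: "mu (B (tens (mo cg) (mo gb))) = mo cg * mo gb - mo gb * mo cg"
  by (simp add: tens_mo Scg mu_diff mu_single mo_mult add.assoc)

lemma d_one: "mu (B (tens (mo cg) 1)) = 0"
  by (simp add: tens_mo1 B0r mu_zero)

lemma d_step: "mu (B (tens (mo cg) (mo g * mo s))) =
   mu (B (tens (mo cg) (mo g))) * mo s + mo g * mu (B (tens (mo cg) (mo s)))"
proof -
  have "B (tens (mo cg) (mo g * mo s)) = B (tens (mo cg) (mo g)) * tens 1 (mo s) + tens (mo g) 1 * B (tens (mo cg) (mo s))"
    using hB unfolding is_double_bracket_K_def by blast
  then show ?thesis by (simp add: tens_mo1 tens_1mo mu_add mu_right mu_left)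
qed

lemma d_inv:
  assumes "x + x' = 0" "x' + x = 0"
    "mu (B (tens (mo cg) (mo x))) = mo cg * mo x - mo x * mo cg"
  shows "mu (B (tens (mo cg) (mo x'))) = mo cg * mo x' - mo x' * mo cg"
proof (rule ring_inv[where l = "mo x" and dl = "mu (B (tens (mo cg) (mo x)))"])
  show "mo x * mo x' = 1" "mo x' * mo x = 1" using assms(1,2) by (simp_all add: mo_mult)
  show "mu (B (tens (mo cg) (mo x))) = mo cg * mo x - mo x * mo cg" by (rule assms(3))
  have "mu (B (tens (mo cg) (mo x * mo x'))) = 0" using assms(1) by (simp add: mo_mult d_one)
  then show "0 = mu (B (tens (mo cg) (mo x))) * mo x' + mo x * mu (B (tens (mo cg) (mo x')))"
    by (simp add: d_step)
qed

lemma d_letter: "mu (B (tens (mo cg) (mo (gen_fg l)))) = mo cg * mo (gen_fg l) - mo (gen_fg l) * mo cg"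
proof -
  obtain x s where l: "l = (x, s)" by (cases l)
  have A: "mu (B (tens (mo cg) (mo gai))) = mo cg * mo gai - mo gai * mo cg"
    by (rule d_inv[OF inv_simps(1,2) d_u])
  have C: "mu (B (tens (mo cg) (mo gbi))) = mo cg * mo gbi - mo gbi * mo cg"
    by (rule d_inv[OF inv_simps(3,4) d_v])
  show ?thesis
    using d_u d_v A C unfolding l ga_def gb_def gai_def gbi_def
    by (cases x; cases s) simp_all
qed

lemma d_list: "mu (B (tens (mo cg) (mo (sum_list (map gen_fg w))))) =
  mo cg * mo (sum_list (map gen_fg w)) - mo (sum_list (map gen_fg w)) * mo cg"
proof (induction w)
  case Nil then show ?case using d_one by simp
next
  case (Cons l w)
  let ?s = "sum_list (map gen_fg w)"
  have "mo (sum_list (map gen_fg (l # w))) = mo (gen_fg l) * mo ?s" by (simp add: mo_mult)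
  let ?L = "mo (gen_fg l)" and ?S = "mo ?s" and ?c = "mo cg"
  have "mu (B (tens ?c (?L * ?S))) = mu (B (tens ?c ?L)) * ?S + ?L * mu (B (tens ?c ?S))" by (rule d_step)
  also have "\<dots> = (?c * ?L - ?L * ?c) * ?S + ?L * (?c * ?S - ?S * ?c)" by (simp only: d_letter Cons.IH)
  also have "\<dots> = ?c * (?L * ?S) - (?L * ?S) * ?c" by (simp add: algebra_simps)
  finally show ?case using \<open>mo (sum_list (map gen_fg (l # w))) = ?L * ?S\<close> by simp
qed

lemma d_all: "mu (B (tens (mo cg) (mo h))) = mo cg * mo h - mo h * mo cg"
  using d_list[of "Rep_fg h"] fg_sum[of h] by simp

lemma B_sum: "finite S \<Longrightarrow> B (\<Sum>h\<in>S. f h) = (\<Sum>h\<in>S. B (f h))"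
  by (induction S rule: finite_induct) (simp_all add: B_zero B_add)

lemma main: "bracket B (u * v * u_inv * v_inv) H \<in> comm_span"
proof -
  have t: "tens (mo cg) H = (\<Sum>h\<in>Poly_Mapping.keys H. scal (Poly_Mapping.lookup H h) (tens (mo cg) (mo h)))"
    by (simp add: tens_def tens_mo scal_single)
  have "bracket B (u * v * u_inv * v_inv) H =
      (\<Sum>h\<in>Poly_Mapping.keys H. scal (Poly_Mapping.lookup H h) (mo cg * mo h - mo h * mo cg))"
    unfolding bracket_def c_eq t by (simp add: B_sum mu_sum B_scal mu_scal d_all)
  also have "\<dots> \<in> comm_span"
    by (rule comm_span_sum) (simp_all add: comm_span.comm comm_span.scal)
  finally show ?thesis .
qed

end

theorem mainTheorem6:
  fixes B :: "alg2 \<Rightarrow> alg2" and H :: alg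
  assumes "is_double_bracket_K B"
  shows "bracket B (u * v * u_inv * v_inv) H \<in> comm_span"
  using main[OF assms] .

end
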